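(* Let $G$ be a finite simple undirected graph with vertex set $V$, $|V|=n\ge 1$, in which every vertex has degree at least $2$. Then $$E_{loc}(G)\le \tfrac12\bigl(1+CC(G)\bigr),$$ with equality when $G$ is a complete graph.
   Context: For a graph $H$ and vertices $i,j$, $d_H(i,j)$ is the number of edges in a shortest $i$–$j$ path in $H$, with $d_H(i,j)=\infty$ if no such path exists, and the convention $1/\infty=0$. For a graph $H$ with $k\ge 2$ vertices, its global efficiency is $E_{glob}(H)=\frac{1}{k(k-1)}\sum_{i\neq j} \frac{1}{d_H(i,j)}$, the sum over ordered pairs of distinct vertices. For a vertex $i$ of $G$, $G_i$ is the subgraph of $G$ induced by the neighbors of $i$ (not including $i$). The local efficiency is $E_{loc}(G)=\frac1n\sum_{i\in V} E_{glob}(G_i)$ and the (Watts–Strogatz) clustering coefficient is $CC(G)=\frac1n\sum_{i\in V}\frac{|E(G_i)|}{\binom{|V(G_i)|}{2}}$. *)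

theory Defs
  imports Main "HOL-Library.Extended_Nat" Complex_Main
begin

definition simple_graph :: "'a set \<Rightarrow> ('a \<Rightarrow> 'a \<Rightarrow> bool) \<Rightarrow> bool" where
  "simple_graph V E \<longleftrightarrow> finite V \<and> (\<forall>x y. E x y \<longrightarrow> E y x) \<and> (\<forall>x. \<not> E x x)
     \<and> (\<forall>x y. E x y \<longrightarrow> x \<in> V \<and> y \<in> V)"

definition neighbors :: "'a set \<Rightarrow> ('a \<Rightarrow> 'a \<Rightarrow> bool) \<Rightarrow> 'a \<Rightarrow> 'a set" where
  "neighbors V E i = {j \<in> V. E i j}"

definition degree :: "'a set \<Rightarrow> ('a \<Rightarrow> 'a \<Rightarrow> bool) \<Rightarrow> 'a \<Rightarrow> nat" where
  "degree V E i = card (neighbors V E i)"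

definition walk_in :: "('a \<Rightarrow> 'a \<Rightarrow> bool) \<Rightarrow> 'a set \<Rightarrow> 'a list \<Rightarrow> bool" where
  "walk_in E S xs \<longleftrightarrow> xs \<noteq> [] \<and> set xs \<subseteq> S \<and>
     (\<forall>k. Suc k < length xs \<longrightarrow> E (xs ! k) (xs ! Suc k))"

text \<open>Distance in the induced subgraph H = G[S]: minimal number of edges of an i--j walk
  (equivalently path) in H, and infinity if none exists (Inf of the empty set of enat).\<close>
definition dist_in :: "('a \<Rightarrow> 'a \<Rightarrow> bool) \<Rightarrow> 'a set \<Rightarrow> 'a \<Rightarrow> 'a \<Rightarrow> enat" where
  "dist_in E S i j = Inf {enat (length xs - 1) | xs. walk_in E S xs \<and> hd xs = i \<and> last xs = j}"

definition inv_dist :: "enat \<Rightarrow> real" where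
  "inv_dist d = (case d of enat k \<Rightarrow> 1 / real k | \<infinity> \<Rightarrow> 0)"

definition E_glob :: "('a \<Rightarrow> 'a \<Rightarrow> bool) \<Rightarrow> 'a set \<Rightarrow> real" where
  "E_glob E S = (let k = card S in
     (\<Sum>(i,j) \<in> {(i,j). i \<in> S \<and> j \<in> S \<and> i \<noteq> j}. inv_dist (dist_in E S i j))
       / (real k * (real k - 1)))"

definition num_edges :: "('a \<Rightarrow> 'a \<Rightarrow> bool) \<Rightarrow> 'a set \<Rightarrow> nat" where
  "num_edges E S = card {{a, b} | a b. a \<in> S \<and> b \<in> S \<and> E a b}"

definition E_loc :: "'a set \<Rightarrow> ('a \<Rightarrow> 'a \<Rightarrow> bool) \<Rightarrow> real" where
  "E_loc V E = (\<Sum>i\<in>V. E_glob E (neighbors V E i)) / real (card V)"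

definition CC :: "'a set \<Rightarrow> ('a \<Rightarrow> 'a \<Rightarrow> bool) \<Rightarrow> real" where
  "CC V E = (\<Sum>i\<in>V. real (num_edges E (neighbors V E i))
                     / real (card (neighbors V E i) choose 2)) / real (card V)"

definition complete_graph :: "'a set \<Rightarrow> ('a \<Rightarrow> 'a \<Rightarrow> bool) \<Rightarrow> bool" where
  "complete_graph V E \<longleftrightarrow> (\<forall>x\<in>V. \<forall>y\<in>V. x \<noteq> y \<longrightarrow> E x y)"

end

theory Submission
  imports Defs
begin

lemma Inf_enat_in: "(X::enat set) \<noteq> {} \<Longrightarrow> Inf X \<in> X"
  unfolding Inf_enat_def by (auto intro: LeastI)

lemma inv_dist_le1: "inv_dist d \<le> 1"
  by (cases d) (auto simp: inv_dist_def divide_le_eq)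

lemma dist_adj:
  assumes "E i j" "i \<in> S" "j \<in> S" "i \<noteq> j"
  shows "dist_in E S i j = enat 1"
proof -
  let ?X = "{enat (length xs - 1) | xs. walk_in E S xs \<and> hd xs = i \<and> last xs = j}"
  have w: "walk_in E S [i,j]" using assms unfolding walk_in_def
    by (auto simp: less_Suc_eq nth_Cons split: nat.splits)
  hence "enat 1 \<in> ?X" by force
  hence le: "Inf ?X \<le> enat 1" by (rule Inf_lower)
  have ne: "?X \<noteq> {}" using \<open>enat 1 \<in> ?X\<close> by blast
  from Inf_enat_in[OF ne] obtain xs where xs: "Inf ?X = enat (length xs - 1)"
    "walk_in E S xs" "hd xs = i" "last xs = j" by blast
  have "length xs \<noteq> 1"
  proof
    assume "length xs = 1"
    then obtain a where "xs = [a]" by (cases xs) auto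
    thus False using xs assms by simp
  qed
  moreover have "xs \<noteq> []" using xs(2) unfolding walk_in_def by simp
  ultimately have "length xs - 1 \<ge> 1" by (cases "length xs") auto
  hence "Inf ?X \<ge> enat 1" using xs(1) by simp
  thus ?thesis using le unfolding dist_in_def by (rule antisym[rotated])
qed

lemma dist_nonadj:
  assumes "\<not> E i j" "i \<noteq> j"
  shows "inv_dist (dist_in E S i j) \<le> 1/2"
proof -
  let ?X = "{enat (length xs - 1) | xs. walk_in E S xs \<and> hd xs = i \<and> last xs = j}"
  show ?thesis
  proof (cases "?X = {}")
    case True
    hence "dist_in E S i j = \<infinity>" unfolding dist_in_def True by (simp add: top_enat_def)
    thus ?thesis by (simp add: inv_dist_def)
  next
    case False
    from Inf_enat_in[OF False] obtain xs where xs: "Inf ?X = enat (length xs - 1)"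
      "walk_in E S xs" "hd xs = i" "last xs = j" by blast
    have "length xs \<noteq> 2"
    proof
      assume "length xs = 2"
      then obtain a b where ab: "xs = [a,b]"
        by (cases xs; cases "tl xs") auto
      hence "E a b" using xs(2) unfolding walk_in_def by force
      thus False using ab xs assms by simp
    qed
    hence "length xs - 1 = 0 \<or> length xs - 1 \<ge> 2" by auto
    thus ?thesis using xs(1) by (auto simp: dist_in_def inv_dist_def)
  qed
qed

lemma count_edges:
  assumes sym: "\<forall>x y. E x y \<longrightarrow> E y x" and irr: "\<forall>x. \<not> E x x" and fin: "finite S"
  shows "card {(a,b). a \<in> S \<and> b \<in> S \<and> E a b} = 2 * num_edges E S"
proof -
  let ?Ed = "{{a, b} | a b. a \<in> S \<and> b \<in> S \<and> E a b}"
  let ?F = "\<lambda>e. {(a,b). a \<in> S \<and> b \<in> S \<and> E a b \<and> {a,b} = e}"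
  have eq: "{(a,b). a \<in> S \<and> b \<in> S \<and> E a b} = (\<Union>e\<in>?Ed. ?F e)" by blast
  have finEd: "finite ?Ed"
  proof -
    have "?Ed \<subseteq> Pow S" by auto
    thus ?thesis using fin finite_subset by blast
  qed
  have fib: "card (?F e) = 2" if "e \<in> ?Ed" for e
  proof -
    from that obtain x y where xy: "e = {x,y}" "x \<in> S" "y \<in> S" "E x y" by blast
    have "x \<noteq> y" using xy irr by auto
    have "?F e = {(x,y),(y,x)}" using xy sym by (auto simp: doubleton_eq_iff)
    thus ?thesis using \<open>x \<noteq> y\<close> by simp
  qed
  have finF: "\<forall>e\<in>?Ed. finite (?F e)"
  proof
    fix e assume "e \<in> ?Ed"
    have "?F e \<subseteq> S \<times> S" by auto
    thus "finite (?F e)" using fin finite_subset by blast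
  qed
  have "card (\<Union>e\<in>?Ed. ?F e) = (\<Sum>e\<in>?Ed. card (?F e))"
    by (rule card_UN_disjoint[OF finEd finF]) blast
  also have "\<dots> = (\<Sum>e\<in>?Ed. 2)" using fib by simp
  finally show ?thesis using eq by (simp add: num_edges_def)
qed

lemma alg_aux: "(D::real) > 0 \<Longrightarrow> (1 + m / (D/2)) / 2 = (2*m + (D - 2*m)/2) / D"
  by (simp add: field_simps)

lemma local_bound:
  assumes sym: "\<forall>x y. E x y \<longrightarrow> E y x" and irr: "\<forall>x. \<not> E x x" and fin: "finite S"
    and k2: "card S \<ge> 2"
  shows "E_glob E S \<le> (1 + real (num_edges E S) / real (card S choose 2)) / 2"
    and "(\<forall>x\<in>S. \<forall>y\<in>S. x \<noteq> y \<longrightarrow> E x y) \<Longrightarrow>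
         E_glob E S = (1 + real (num_edges E S) / real (card S choose 2)) / 2"
proof -
  let ?P = "{(i,j). i \<in> S \<and> j \<in> S \<and> i \<noteq> j}"
  let ?A = "{(a,b). a \<in> S \<and> b \<in> S \<and> E a b}"
  let ?g = "\<lambda>(i,j). if E i j then 1 else (1/2::real)"
  define k where "k = card S"
  have Psig: "?P = (SIGMA i:S. S - {i})" by auto
  have cardP: "card ?P = k * (k - 1)"
    unfolding Psig k_def using fin by (simp add: card_Diff_singleton)
  have finP: "finite ?P" unfolding Psig using fin by simp
  have AP: "?A \<subseteq> ?P" using irr by auto
  have AP': "?A = {p \<in> ?P. E (fst p) (snd p)}" using irr by auto
  have m2: "real (card ?A) = 2 * real (num_edges E S)"
    using count_edges[OF sym irr fin] by simp
  have sumg: "(\<Sum>p\<in>?P. ?g p) = real (card ?A) + (real (card ?P) - real (card ?A)) / 2"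
  proof -
    have "(\<Sum>p\<in>?P. ?g p) = (\<Sum>p\<in>?P. 1/2 + (if E (fst p) (snd p) then 1/2 else 0))"
      by (rule sum.cong) auto
    also have "\<dots> = real (card ?P) / 2 + (\<Sum>p\<in>?P. if E (fst p) (snd p) then 1/2 else 0)"
      by (simp add: sum.distrib)
    also have "(\<Sum>p\<in>?P. if E (fst p) (snd p) then 1/2 else (0::real))
        = (\<Sum>p\<in>?P \<inter> {p. E (fst p) (snd p)}. 1/2)"
      using finP by (simp add: sum.If_cases)
    also have "?P \<inter> {p. E (fst p) (snd p)} = ?A" using irr by auto
    also have "(\<Sum>p\<in>?A. (1/2::real)) = real (card ?A) / 2" by simp
    finally show ?thesis by (simp add: field_simps)
  qed
  have kk: "real k * (real k - 1) > 0" using k2 unfolding k_def by simp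
  have ch: "real (card S choose 2) = real k * (real k - 1) / 2"
  proof -
    have "even (k * (k - 1))" by (cases "even k") auto
    hence "real (k * (k - 1) div 2) = real (k * (k-1)) / 2"
      by (simp add: real_of_nat_div)
    thus ?thesis unfolding k_def[symmetric] choose_two using k2 k_def by (simp add: of_nat_diff)
  qed
  have rP: "real (card ?P) = real k * (real k - 1)" using cardP k2 k_def by (simp add: of_nat_diff)
  have rhs: "(1 + real (num_edges E S) / real (card S choose 2)) / 2
      = (\<Sum>p\<in>?P. ?g p) / (real k * (real k - 1))"
    unfolding sumg ch rP m2 by (rule alg_aux[OF kk])
  have Eg: "E_glob E S = (\<Sum>p\<in>?P. inv_dist (dist_in E S (fst p) (snd p))) / (real k * (real k - 1))"
    unfolding E_glob_def k_def Let_def by (simp add: case_prod_beta)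
  have le: "inv_dist (dist_in E S (fst p) (snd p)) \<le> ?g p" if "p \<in> ?P" for p
    using that dist_adj[of E "fst p" "snd p" S] dist_nonadj[of E "fst p" "snd p" S]
    by (auto simp: inv_dist_def case_prod_beta)
  show "E_glob E S \<le> (1 + real (num_edges E S) / real (card S choose 2)) / 2"
    unfolding Eg rhs using kk by (intro divide_right_mono sum_mono le) auto
  assume cpl: "\<forall>x\<in>S. \<forall>y\<in>S. x \<noteq> y \<longrightarrow> E x y"
  have eqp: "inv_dist (dist_in E S (fst p) (snd p)) = ?g p" if "p \<in> ?P" for p
    using that cpl dist_adj[of E "fst p" "snd p" S]
    by (auto simp: inv_dist_def case_prod_beta)
  show "E_glob E S = (1 + real (num_edges E S) / real (card S choose 2)) / 2"
  proof -
    have "(\<Sum>p\<in>?P. inv_dist (dist_in E S (fst p) (snd p))) = (\<Sum>p\<in>?P. ?g p)"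
      using eqp by (rule sum.cong[OF refl])
    thus ?thesis unfolding Eg rhs by simp
  qed
qed

theorem theorem3:
  fixes V :: "'a set" and E :: "'a \<Rightarrow> 'a \<Rightarrow> bool"
  assumes "simple_graph V E"
    and "card V \<ge> 1"
    and "\<forall>i\<in>V. degree V E i \<ge> 2"
  shows "E_loc V E \<le> (1 + CC V E) / 2 \<and>
         (complete_graph V E \<longrightarrow> E_loc V E = (1 + CC V E) / 2)"
proof -
  have sym: "\<forall>x y. E x y \<longrightarrow> E y x" and irr: "\<forall>x. \<not> E x x" and finV: "finite V"
    using assms(1) unfolding simple_graph_def by auto
  define c where "c i = real (num_edges E (neighbors V E i)) / real (card (neighbors V E i) choose 2)" for i
  have finN: "finite (neighbors V E i)" for i using finV unfolding neighbors_def by simp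
  have k2: "card (neighbors V E i) \<ge> 2" if "i \<in> V" for i
    using assms(3) that unfolding degree_def by auto
  have n: "real (card V) > 0" using assms(2) by simp
  have CCe: "(1 + CC V E) / 2 = (\<Sum>i\<in>V. (1 + c i) / 2) / real (card V)"
  proof -
    have "(\<Sum>i\<in>V. (1 + c i) / 2) = (real (card V) + (\<Sum>i\<in>V. c i)) / 2"
      by (simp add: sum.distrib sum_divide_distrib[symmetric])
    thus ?thesis using n unfolding CC_def c_def[symmetric] by (simp add: field_simps)
  qed
  have part1: "E_loc V E \<le> (1 + CC V E) / 2"
    unfolding CCe E_loc_def using n
  proof (intro divide_right_mono sum_mono)
    fix i assume "i \<in> V"
    show "E_glob E (neighbors V E i) \<le> (1 + c i) / 2"
      unfolding c_def by (rule local_bound(1)[OF sym irr finN k2[OF \<open>i \<in> V\<close>]])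
  qed (use n in simp)
  have part2: "E_loc V E = (1 + CC V E) / 2" if cpl: "complete_graph V E"
  proof -
    have "E_glob E (neighbors V E i) = (1 + c i) / 2" if "i \<in> V" for i
      unfolding c_def
      by (rule local_bound(2)[OF sym irr finN k2[OF that]])
         (use cpl in \<open>auto simp: complete_graph_def neighbors_def\<close>)
    hence "(\<Sum>i\<in>V. E_glob E (neighbors V E i)) = (\<Sum>i\<in>V. (1 + c i) / 2)"
      by (rule sum.cong[OF refl])
    thus ?thesis unfolding CCe E_loc_def by simp
  qed
  show ?thesis using part1 part2 by blast
qed

end
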